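(* Let $\mathcal{H}$ be a complex Hilbert space, $A\in\mathcal{B}(\mathcal{H})$ positive and $S\in\mathcal{B}_A(\mathcal{H})$. Then $$d\omega_A^2(S)\le\left\|SS^{\sharp_A}+\left(S^{\sharp_A}S\right)^2\right\|_A^{1/2}\left\|S^{\sharp_A}S+\left(S^{\sharp_A}S\right)^2\right\|_A^{1/2}.$$
   Context: $\mathcal{B}(\mathcal{H})$ denotes the bounded linear operators on $\mathcal{H}$. For positive $A$, $\langle x,z\rangle_A=\langle Ax,z\rangle$ and $\|z\|_A=\|A^{1/2}z\|$. $\mathcal{B}_A(\mathcal{H})$ is the set of $S\in\mathcal{B}(\mathcal{H})$ for which some $R\in\mathcal{B}(\mathcal{H})$ satisfies $AR=S^*A$; for such $S$, $S^{\sharp_A}=A^{\dagger}S^*A$ with $A^\dagger$ the Moore–Penrose inverse of $A$. For operators $T$ bounded with respect to $\|\cdot\|_A$: $\|T\|_A=\sup_{\|z\|_A=1}\|Tz\|_A$ and $d\omega_A(T)=\sup_{\|z\|_A=1}(|\langle Tz,z\rangle_A|^2+\|Tz\|_A^4)^{1/2}$. *)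

theory Defs
  imports Complex_Main
begin

text \<open>A complex Hilbert space is modelled as a type 'h with its additive group
structure, an explicit complex scalar multiplication smul and an explicit inner
product ip (linear in the first argument, conjugate-linear in the second).\<close>

definition hnorm :: "('h \<Rightarrow> 'h \<Rightarrow> complex) \<Rightarrow> 'h \<Rightarrow> real" where
  "hnorm ip x = sqrt (Re (ip x x))"

definition complex_hilbert ::
  "(complex \<Rightarrow> 'h::ab_group_add \<Rightarrow> 'h) \<Rightarrow> ('h \<Rightarrow> 'h \<Rightarrow> complex) \<Rightarrow> bool" where
  "complex_hilbert smul ip \<longleftrightarrow>
     (\<forall>a x y. smul a (x + y) = smul a x + smul a y) \<and>
     (\<forall>a b x. smul (a + b) x = smul a x + smul b x) \<and>
     (\<forall>a b x. smul (a * b) x = smul a (smul b x)) \<and>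
     (\<forall>x. smul 1 x = x) \<and>
     (\<forall>x y z. ip (x + y) z = ip x z + ip y z) \<and>
     (\<forall>a x y. ip (smul a x) y = a * ip x y) \<and>
     (\<forall>x y. ip y x = cnj (ip x y)) \<and>
     (\<forall>x. 0 \<le> Re (ip x x)) \<and>
     (\<forall>x. ip x x = 0 \<longrightarrow> x = 0) \<and>
     (\<forall>X. (\<forall>e>0. \<exists>N. \<forall>m\<ge>N. \<forall>n\<ge>N. hnorm ip (X m - X n) < e) \<longrightarrow>
          (\<exists>L. (\<lambda>n. hnorm ip (X n - L)) \<longlonglongrightarrow> 0))"

definition bounded_op ::
  "(complex \<Rightarrow> 'h::ab_group_add \<Rightarrow> 'h) \<Rightarrow> ('h \<Rightarrow> 'h \<Rightarrow> complex) \<Rightarrow> ('h \<Rightarrow> 'h) \<Rightarrow> bool" where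
  "bounded_op smul ip T \<longleftrightarrow>
     (\<forall>x y. T (x + y) = T x + T y) \<and> (\<forall>a x. T (smul a x) = smul a (T x)) \<and>
     (\<exists>C. \<forall>x. hnorm ip (T x) \<le> C * hnorm ip x)"

definition positive_op :: "('h \<Rightarrow> 'h \<Rightarrow> complex) \<Rightarrow> ('h \<Rightarrow> 'h) \<Rightarrow> bool" where
  "positive_op ip A \<longleftrightarrow> (\<forall>x. Im (ip (A x) x) = 0 \<and> 0 \<le> Re (ip (A x) x))"

definition adj :: "('h \<Rightarrow> 'h \<Rightarrow> complex) \<Rightarrow> ('h \<Rightarrow> 'h) \<Rightarrow> ('h \<Rightarrow> 'h)" where
  "adj ip S = (THE T. \<forall>x y. ip (S x) y = ip x (T y))"

definition B_A ::
  "(complex \<Rightarrow> 'h::ab_group_add \<Rightarrow> 'h) \<Rightarrow> ('h \<Rightarrow> 'h \<Rightarrow> complex) \<Rightarrow> ('h \<Rightarrow> 'h) \<Rightarrow> ('h \<Rightarrow> 'h) set" where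
  "B_A smul ip A = {S. bounded_op smul ip S \<and>
      (\<exists>R. bounded_op smul ip R \<and> A \<circ> R = adj ip S \<circ> A)}"

text \<open>Closure of the range of A (w.r.t. the Hilbert norm), orthogonal projection onto it,
and the Moore-Penrose inverse: for y in R(A) + R(A)^perp, A^dagger y is the unique
x in N(A)^perp with A x = P_{closure R(A)} y.\<close>
definition range_closure :: "('h::ab_group_add \<Rightarrow> 'h \<Rightarrow> complex) \<Rightarrow> ('h \<Rightarrow> 'h) \<Rightarrow> 'h set" where
  "range_closure ip A = {m. \<forall>e>0. \<exists>x. hnorm ip (m - A x) < e}"

definition proj_range :: "('h::ab_group_add \<Rightarrow> 'h \<Rightarrow> complex) \<Rightarrow> ('h \<Rightarrow> 'h) \<Rightarrow> 'h \<Rightarrow> 'h" where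
  "proj_range ip A y = (THE p. p \<in> range_closure ip A \<and> (\<forall>m\<in>range_closure ip A. ip (y - p) m = 0))"

definition moore_penrose :: "('h::ab_group_add \<Rightarrow> 'h \<Rightarrow> complex) \<Rightarrow> ('h \<Rightarrow> 'h) \<Rightarrow> 'h \<Rightarrow> 'h" where
  "moore_penrose ip A y = (THE x. (\<forall>k. A k = 0 \<longrightarrow> ip x k = 0) \<and> A x = proj_range ip A y)"

definition sharpA :: "('h::ab_group_add \<Rightarrow> 'h \<Rightarrow> complex) \<Rightarrow> ('h \<Rightarrow> 'h) \<Rightarrow> ('h \<Rightarrow> 'h) \<Rightarrow> ('h \<Rightarrow> 'h)" where
  "sharpA ip A S = moore_penrose ip A \<circ> adj ip S \<circ> A"

text \<open>A-seminorm \<parallel>z\<parallel>_A = \<parallel>A^{1/2} z\<parallel> = sqrt \<langle>Az,z\<rangle>.\<close>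
definition normA :: "('h \<Rightarrow> 'h \<Rightarrow> complex) \<Rightarrow> ('h \<Rightarrow> 'h) \<Rightarrow> 'h \<Rightarrow> real" where
  "normA ip A z = sqrt (Re (ip (A z) z))"

text \<open>Suprema over the A-unit sphere; 0 is inserted so that the (degenerate) empty
sphere (A = 0) gives 0; otherwise this does not change the supremum of nonnegative values.\<close>
definition opnormA :: "('h \<Rightarrow> 'h \<Rightarrow> complex) \<Rightarrow> ('h \<Rightarrow> 'h) \<Rightarrow> ('h \<Rightarrow> 'h) \<Rightarrow> real" where
  "opnormA ip A T = Sup (insert 0 {normA ip A (T z) | z. normA ip A z = 1})"

definition domegaA :: "('h \<Rightarrow> 'h \<Rightarrow> complex) \<Rightarrow> ('h \<Rightarrow> 'h) \<Rightarrow> ('h \<Rightarrow> 'h) \<Rightarrow> real" where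
  "domegaA ip A T = Sup (insert 0 {sqrt ((cmod (ip (A (T z)) z))\<^sup>2 + (normA ip A (T z)) ^ 4) | z. normA ip A z = 1})"

end

theory Submission
  imports Defs
begin


locale chs =
  fixes smul :: "complex \<Rightarrow> 'h::ab_group_add \<Rightarrow> 'h" and ip :: "'h \<Rightarrow> 'h \<Rightarrow> complex"
  assumes H: "complex_hilbert smul ip"
begin

lemmas HH = H[unfolded complex_hilbert_def]

lemma smul_add_right: "smul a (x + y) = smul a x + smul a y"
  using HH[THEN conjunct1] by blast
lemma smul_add_left: "smul (a + b) x = smul a x + smul b x"
  using HH[THEN conjunct2, THEN conjunct1] by blast
lemma smul_assoc: "smul (a * b) x = smul a (smul b x)"
  using HH[THEN conjunct2, THEN conjunct2, THEN conjunct1] by blast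
lemma smul_one[simp]: "smul 1 x = x"
  using HH[THEN conjunct2, THEN conjunct2, THEN conjunct2, THEN conjunct1] by blast
lemma ip_add_left: "ip (x + y) z = ip x z + ip y z"
  using HH[THEN conjunct2, THEN conjunct2, THEN conjunct2, THEN conjunct2, THEN conjunct1] by blast
lemma ip_smul_left: "ip (smul a x) y = a * ip x y"
  using HH[THEN conjunct2, THEN conjunct2, THEN conjunct2, THEN conjunct2, THEN conjunct2, THEN conjunct1] by blast
lemma ip_cnj: "ip y x = cnj (ip x y)"
  using HH[THEN conjunct2, THEN conjunct2, THEN conjunct2, THEN conjunct2, THEN conjunct2, THEN conjunct2, THEN conjunct1] by blast
lemma ip_pos: "0 \<le> Re (ip x x)"
  using HH[THEN conjunct2, THEN conjunct2, THEN conjunct2, THEN conjunct2, THEN conjunct2, THEN conjunct2, THEN conjunct2, THEN conjunct1] by blast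
lemma ip_zero: "ip x x = 0 \<Longrightarrow> x = 0"
  using HH[THEN conjunct2, THEN conjunct2, THEN conjunct2, THEN conjunct2, THEN conjunct2, THEN conjunct2, THEN conjunct2, THEN conjunct2, THEN conjunct1] by blast
lemma complete: "(\<forall>e>0. \<exists>N. \<forall>m\<ge>N. \<forall>n\<ge>N. hnorm ip (X m - X n) < e) \<Longrightarrow>
          (\<exists>L. (\<lambda>n. hnorm ip (X n - L)) \<longlonglongrightarrow> 0)"
  using HH[THEN conjunct2, THEN conjunct2, THEN conjunct2, THEN conjunct2, THEN conjunct2, THEN conjunct2, THEN conjunct2, THEN conjunct2, THEN conjunct2] by blast

lemma ip_add_right: "ip x (y + z) = ip x y + ip x z"
proof -
  have "ip x (y+z) = cnj (ip (y+z) x)" by (rule ip_cnj)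
  also have "\<dots> = cnj (ip y x) + cnj (ip z x)" by (simp add: ip_add_left)
  also have "\<dots> = ip x y + ip x z" using ip_cnj[of x y] ip_cnj[of x z] by simp
  finally show ?thesis .
qed
lemma ip_smul_right: "ip x (smul a y) = cnj a * ip x y"
proof -
  have "ip x (smul a y) = cnj (ip (smul a y) x)" by (rule ip_cnj)
  also have "\<dots> = cnj a * cnj (ip y x)" by (simp add: ip_smul_left)
  also have "\<dots> = cnj a * ip x y" using ip_cnj[of x y] by simp
  finally show ?thesis .
qed
lemma ip_zero_left[simp]: "ip 0 y = 0"
  using ip_add_left[of 0 0 y] by simp
lemma ip_zero_right[simp]: "ip y 0 = 0"
  using ip_add_right[of y 0 0] by simp
lemma ip_minus_left: "ip (- x) y = - ip x y"
proof -
  have h: "ip x y + ip (-x) y = 0" using ip_add_left[of x "-x" y] by simp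
  have "ip (-x) y = (ip x y + ip (-x) y) - ip x y" by simp
  then show ?thesis using h by simp
qed
lemma ip_minus_right: "ip y (- x) = - ip y x"
proof -
  have h: "ip y x + ip y (-x) = 0" using ip_add_right[of y x "-x"] by simp
  have "ip y (-x) = (ip y x + ip y (-x)) - ip y x" by simp
  then show ?thesis using h by simp
qed
lemma ip_diff_left: "ip (x - y) z = ip x z - ip y z"
  using ip_add_left[of x "-y" z] by (simp add: ip_minus_left)
lemma ip_diff_right: "ip z (x - y) = ip z x - ip z y"
  using ip_add_right[of z x "-y"] by (simp add: ip_minus_right)
lemma ip_self_real: "Im (ip x x) = 0"
proof -
  have "Im (ip x x) = Im (cnj (ip x x))" using ip_cnj[of x x] by (rule arg_cong)
  then show ?thesis by simp
qed
lemma smul_zero_right[simp]: "smul a 0 = 0"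
  using smul_add_right[of a 0 0] by simp
lemma smul_zero_left[simp]: "smul 0 x = 0"
  using smul_add_left[of 0 0 x] by simp
lemma smul_minus_right: "smul a (- x) = - smul a x"
proof -
  have h: "smul a x + smul a (-x) = 0" using smul_add_right[of a x "-x"] by simp
  have "smul a (-x) = - smul a x + (smul a x + smul a (-x))" by (simp add: add.assoc[symmetric])
  then show ?thesis using h by simp
qed
lemma smul_diff_right: "smul a (x - y) = smul a x - smul a y"
  using smul_add_right[of a x "-y"] by (simp add: smul_minus_right)
lemma smul_minus_left: "smul (- a) x = - smul a x"
proof -
  have h: "smul a x + smul (-a) x = 0" using smul_add_left[of a "-a" x] by simp
  have "smul (-a) x = - smul a x + (smul a x + smul (-a) x)" by (simp add: add.assoc[symmetric])
  then show ?thesis using h by simp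
qed
lemma smul_diff_left: "smul (a - b) x = smul a x - smul b x"
  using smul_add_left[of a "-b" x] by (simp add: smul_minus_left)

end



context chs begin

definition linop :: "('h \<Rightarrow> 'h) \<Rightarrow> bool" where
  "linop T \<longleftrightarrow> (\<forall>x y. T (x + y) = T x + T y) \<and> (\<forall>a x. T (smul a x) = smul a (T x))"
definition posop :: "('h \<Rightarrow> 'h) \<Rightarrow> bool" where
  "posop A \<longleftrightarrow> linop A \<and> (\<forall>x. Im (ip (A x) x) = 0 \<and> 0 \<le> Re (ip (A x) x))"

lemma linop_add: "linop T \<Longrightarrow> T (x + y) = T x + T y" by (simp add: linop_def)
lemma linop_smul: "linop T \<Longrightarrow> T (smul a x) = smul a (T x)" by (simp add: linop_def)
lemma linop_zero: "linop T \<Longrightarrow> T 0 = 0"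
  using linop_add[of T 0 0] by simp
lemma linop_minus: "linop T \<Longrightarrow> T (- x) = - T x"
proof -
  assume l: "linop T"
  have h: "T x + T (-x) = 0" using linop_add[OF l, of x "-x"] linop_zero[OF l] by simp
  have "T (-x) = - T x + (T x + T (-x))" by (simp add: add.assoc[symmetric])
  then show ?thesis using h by simp
qed
lemma linop_diff: "linop T \<Longrightarrow> T (x - y) = T x - T y"
  using linop_add[of T x "-y"] linop_minus[of T y] by simp
lemma linop_id: "linop (\<lambda>x. x)" by (simp add: linop_def)
lemma linop_comp: "linop S \<Longrightarrow> linop T \<Longrightarrow> linop (\<lambda>x. S (T x))"
  by (simp add: linop_def)
lemma linop_plus: "linop S \<Longrightarrow> linop T \<Longrightarrow> linop (\<lambda>x. S x + T x)"
  by (simp add: linop_def smul_add_right algebra_simps)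
lemma posop_id: "posop (\<lambda>x. x)" by (simp add: posop_def linop_id ip_self_real ip_pos)

lemma posop_lin: "posop A \<Longrightarrow> linop A" by (simp add: posop_def)
lemma posop_re: "posop A \<Longrightarrow> 0 \<le> Re (ip (A x) x)" by (simp add: posop_def)
lemma posop_im: "posop A \<Longrightarrow> Im (ip (A x) x) = 0" by (simp add: posop_def)

lemma posop_herm:
  assumes P: "posop A" shows "ip (A x) y = ip x (A y)"
proof -
  have L: "linop A" using P by (rule posop_lin)
  let ?p = "ip (A x) y" and ?q = "ip (A y) x"
  have "Im (ip (A (x + y)) (x + y)) = 0" using posop_im[OF P] .
  then have e1: "Im (?p + ?q) = 0"
    using posop_im[OF P, of x] posop_im[OF P, of y]
    by (simp add: linop_add[OF L] ip_add_left ip_add_right)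
  have "Im (ip (A (smul \<i> x + y)) (smul \<i> x + y)) = 0" using posop_im[OF P] .
  then have e2: "Im (\<i> * ?p - \<i> * ?q) = 0"
    using posop_im[OF P, of x] posop_im[OF P, of y]
    by (simp add: linop_add[OF L] linop_smul[OF L] ip_add_left ip_add_right ip_smul_left ip_smul_right)
  have "?p = cnj ?q" using e1 e2 by (simp add: complex_eq_iff)
  moreover have "ip x (A y) = cnj ?q" by (rule ip_cnj)
  ultimately show ?thesis by simp
qed

lemma posop_herm2: "posop A \<Longrightarrow> ip (A y) x = cnj (ip (A x) y)"
  by (metis ip_cnj posop_herm)

lemma expand:
  assumes P: "posop A"
  shows "Re (ip (A (x - smul (complex_of_real t * ip (A x) y) y)) (x - smul (complex_of_real t * ip (A x) y) y))
     = Re (ip (A x) x) - 2 * t * (cmod (ip (A x) y))\<^sup>2 + t\<^sup>2 * (cmod (ip (A x) y))\<^sup>2 * Re (ip (A y) y)"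
proof -
  have L: "linop A" using P by (rule posop_lin)
  define c where "c = ip (A x) y"
  define l where "l = complex_of_real t * c"
  have "ip (A (x - smul l y)) (x - smul l y) = ip (A x) x - cnj l * c - l * ip (A y) x + l * cnj l * ip (A y) y"
    by (simp add: linop_diff[OF L] linop_smul[OF L] ip_diff_left ip_diff_right ip_smul_left ip_smul_right c_def algebra_simps)
  also have "ip (A y) x = cnj c" unfolding c_def by (rule posop_herm2[OF P])
  finally have e: "ip (A (x - smul l y)) (x - smul l y) = ip (A x) x - cnj l * c - l * cnj c + l * cnj l * ip (A y) y" .
  have cc: "c * cnj c = complex_of_real ((cmod c)\<^sup>2)" by (metis complex_norm_square of_real_power)
  have f1: "cnj l * c = complex_of_real (t * (cmod c)\<^sup>2)" unfolding l_def using cc by (simp add: mult.commute)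
  have f2: "l * cnj c = complex_of_real (t * (cmod c)\<^sup>2)" unfolding l_def using cc by (simp add: mult.assoc)
  have f3: "l * cnj l = complex_of_real (t\<^sup>2 * (cmod c)\<^sup>2)" unfolding l_def using cc
    by (simp add: power2_eq_square mult.commute mult.left_commute)
  have "Re (ip (A (x - smul l y)) (x - smul l y)) = Re (ip (A x) x) - 2 * t * (cmod c)\<^sup>2 + t\<^sup>2 * (cmod c)\<^sup>2 * Re (ip (A y) y)"
    unfolding e f1 f2 f3 by simp
  then show ?thesis by (simp add: c_def l_def)
qed


lemma quad_lemma:
  fixes a b k :: real
  assumes h: "\<And>t. 0 \<le> a - 2 * t * k + t\<^sup>2 * k * b" and k: "0 \<le> k" and b: "0 \<le> b"
  shows "k \<le> a * b"
proof (cases "b = 0")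
  case True
  show ?thesis
  proof (rule ccontr)
    assume "\<not> k \<le> a * b"
    then have kp: "k > 0" using True by simp
    have "0 \<le> a - 2 * ((\<bar>a\<bar> + 1) / k) * k" using h[of "(\<bar>a\<bar> + 1) / k"] True by simp
    also have "\<dots> = a - 2 * (\<bar>a\<bar> + 1)" using kp by simp
    finally show False by simp
  qed
next
  case False
  then have bp: "b > 0" using b by simp
  have "0 \<le> a - 2 * (1 / b) * k + (1 / b)\<^sup>2 * k * b" by (rule h)
  also have "\<dots> = a - k / b" using bp by (simp add: power2_eq_square field_simps)
  finally have "k / b \<le> a" by simp
  then show ?thesis using bp by (simp add: divide_le_eq mult.commute)
qed

lemma cauchy_schwarz:
  assumes P: "posop A"
  shows "(cmod (ip (A x) y))\<^sup>2 \<le> Re (ip (A x) x) * Re (ip (A y) y)"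
proof (rule quad_lemma)
  fix t
  show "0 \<le> Re (ip (A x) x) - 2 * t * (cmod (ip (A x) y))\<^sup>2 + t\<^sup>2 * (cmod (ip (A x) y))\<^sup>2 * Re (ip (A y) y)"
    using expand[OF P, of x t y] posop_re[OF P] by metis
qed (simp_all add: posop_re[OF P])

lemma normA_sq: "posop A \<Longrightarrow> (normA ip A x)\<^sup>2 = Re (ip (A x) x)"
  using posop_re[of A x] by (simp add: normA_def)
lemma normA_nonneg: "posop A \<Longrightarrow> 0 \<le> normA ip A x"
  using posop_re[of A x] by (simp add: normA_def)

lemma cauchy_schwarz2:
  assumes P: "posop A"
  shows "cmod (ip (A x) y) \<le> normA ip A x * normA ip A y"
proof -
  have "(cmod (ip (A x) y))\<^sup>2 \<le> (normA ip A x * normA ip A y)\<^sup>2"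
    using cauchy_schwarz[OF P, of x y] by (simp add: power_mult_distrib normA_sq[OF P])
  then show ?thesis using normA_nonneg[OF P]
    by (meson mult_nonneg_nonneg norm_ge_zero power2_le_imp_le)
qed

lemma posop_zero:
  assumes P: "posop A" and z: "Re (ip (A v) v) = 0"
  shows "A v = 0"
proof -
  have "(cmod (ip (A v) (A v)))\<^sup>2 \<le> 0"
    using cauchy_schwarz[OF P, of v "A v"] z by simp
  then have "ip (A v) (A v) = 0" by simp
  then show ?thesis by (rule ip_zero)
qed

lemma normA_triangle:
  assumes P: "posop A"
  shows "normA ip A (x + y) \<le> normA ip A x + normA ip A y"
proof -
  have L: "linop A" using P by (rule posop_lin)
  have "ip (A (x + y)) (x + y) = ip (A x) x + ip (A y) y + (ip (A x) y + ip (A y) x)"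
    by (simp add: linop_add[OF L] ip_add_left ip_add_right algebra_simps)
  also have "ip (A x) y + ip (A y) x = complex_of_real (2 * Re (ip (A x) y))"
    using posop_herm2[OF P, of y x] by (simp add: complex_add_cnj)
  finally have "Re (ip (A (x + y)) (x + y)) = Re (ip (A x) x) + Re (ip (A y) y) + 2 * Re (ip (A x) y)"
    by simp
  also have "\<dots> \<le> Re (ip (A x) x) + Re (ip (A y) y) + 2 * (normA ip A x * normA ip A y)"
    using cauchy_schwarz2[OF P, of x y] complex_Re_le_cmod[of "ip (A x) y"] by simp
  also have "\<dots> = (normA ip A x + normA ip A y)\<^sup>2"
    by (simp add: normA_sq[OF P, symmetric] power2_eq_square algebra_simps)
  finally have "(normA ip A (x + y))\<^sup>2 \<le> (normA ip A x + normA ip A y)\<^sup>2"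
    by (simp add: normA_sq[OF P])
  then show ?thesis using normA_nonneg[OF P]
    by (meson add_nonneg_nonneg power2_le_imp_le)
qed

lemma normA_smul:
  assumes P: "posop A"
  shows "normA ip A (smul c x) = cmod c * normA ip A x"
proof -
  have L: "linop A" using P by (rule posop_lin)
  have "ip (A (smul c x)) (smul c x) = (c * cnj c) * ip (A x) x"
    by (simp add: linop_smul[OF L] ip_smul_left ip_smul_right)
  also have "c * cnj c = complex_of_real ((cmod c)\<^sup>2)" by (metis complex_norm_square of_real_power)
  finally have "Re (ip (A (smul c x)) (smul c x)) = (cmod c)\<^sup>2 * Re (ip (A x) x)" by simp
  then show ?thesis unfolding normA_def by (simp add: real_sqrt_mult)
qed

lemma normA_minus: "posop A \<Longrightarrow> normA ip A (- x) = normA ip A x"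
  unfolding normA_def by (simp add: linop_minus posop_lin ip_minus_left ip_minus_right)

lemma normA_diff_sym: "posop A \<Longrightarrow> normA ip A (x - y) = normA ip A (y - x)"
  by (metis minus_diff_eq normA_minus)

lemma hnorm_is: "hnorm ip x = normA ip (\<lambda>x. x) x"
  by (simp add: hnorm_def normA_def)

end



context chs begin

lemma hnorm_sq: "(hnorm ip x)\<^sup>2 = Re (ip x x)"
  using normA_sq[OF posop_id] by (simp add: hnorm_is)
lemma hnorm_nonneg: "0 \<le> hnorm ip x"
  using normA_nonneg[OF posop_id] by (simp add: hnorm_is)
lemma hnorm_triangle: "hnorm ip (x + y) \<le> hnorm ip x + hnorm ip y"
  using normA_triangle[OF posop_id] by (simp add: hnorm_is)
lemma hnorm_sym: "hnorm ip (x - y) = hnorm ip (y - x)"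
  using normA_diff_sym[OF posop_id] by (simp add: hnorm_is)
lemma hnorm_cs: "cmod (ip x y) \<le> hnorm ip x * hnorm ip y"
  using cauchy_schwarz2[OF posop_id] by (simp add: hnorm_is)
lemma hnorm_smul: "hnorm ip (smul c x) = cmod c * hnorm ip x"
  using normA_smul[OF posop_id] by (simp add: hnorm_is)
lemma hnorm_eq0: "hnorm ip x = 0 \<Longrightarrow> x = 0"
proof -
  assume "hnorm ip x = 0"
  then have "Re (ip x x) = 0" using hnorm_sq[of x] by simp
  then have "ip x x = 0" using ip_self_real[of x] by (simp add: complex_eq_iff)
  then show ?thesis by (rule ip_zero)
qed

lemma parallelogram: "Re (ip (u - v) (u - v)) + Re (ip (u + v) (u + v)) = 2 * Re (ip u u) + 2 * Re (ip v v)"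
proof -
  have "ip (u - v) (u - v) + ip (u + v) (u + v) = 2 * ip u u + 2 * ip v v"
    by (simp add: ip_add_left ip_add_right ip_diff_left ip_diff_right algebra_simps)
  then have "Re (ip (u - v) (u - v) + ip (u + v) (u + v)) = Re (2 * ip u u + 2 * ip v v)" by simp
  then show ?thesis by simp
qed

definition closed_sub :: "'h set \<Rightarrow> bool" where
  "closed_sub M \<longleftrightarrow> 0 \<in> M \<and> (\<forall>x y. x \<in> M \<longrightarrow> y \<in> M \<longrightarrow> x + y \<in> M) \<and> (\<forall>a x. x \<in> M \<longrightarrow> smul a x \<in> M)
     \<and> (\<forall>X L. (\<forall>n. X n \<in> M) \<longrightarrow> (\<lambda>n. hnorm ip (X n - L)) \<longlonglongrightarrow> 0 \<longrightarrow> L \<in> M)"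

lemma projection:
  assumes C: "closed_sub M"
  shows "\<exists>p\<in>M. \<forall>m\<in>M. ip (x - p) m = 0"
proof -
  have M0: "0 \<in> M" and Madd: "\<And>a b. a \<in> M \<Longrightarrow> b \<in> M \<Longrightarrow> a + b \<in> M"
    and Msm: "\<And>a b. b \<in> M \<Longrightarrow> smul a b \<in> M"
    and Mcl: "\<And>X L. (\<forall>n. X n \<in> M) \<Longrightarrow> (\<lambda>n. hnorm ip (X n - L)) \<longlonglongrightarrow> 0 \<Longrightarrow> L \<in> M"
    using C unfolding closed_sub_def by blast+
  define D where "D = (\<lambda>m. Re (ip (x - m) (x - m))) ` M"
  define d where "d = Inf D"
  have Dne: "D \<noteq> {}" using M0 D_def by blast
  have Dbdd: "bdd_below D" unfolding D_def by (rule bdd_belowI[of _ 0]) (auto simp: ip_pos)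
  have dlow: "\<And>m. m \<in> M \<Longrightarrow> d \<le> Re (ip (x - m) (x - m))"
    unfolding d_def D_def by (rule cInf_lower) (use Dbdd D_def in auto)
  have "\<forall>n. \<exists>m. m \<in> M \<and> Re (ip (x - m) (x - m)) < d + 1 / (real n + 1)"
  proof
    fix n
    have "Inf D < d + 1 / (real n + 1)" unfolding d_def by (simp add: add_pos_pos)
    then obtain q where "q \<in> D" "q < d + 1 / (real n + 1)" using cInf_lessD[OF Dne] by blast
    then show "\<exists>m. m \<in> M \<and> Re (ip (x - m) (x - m)) < d + 1 / (real n + 1)" unfolding D_def by blast
  qed
  then obtain X where X: "\<And>n. X n \<in> M" "\<And>n. Re (ip (x - X n) (x - X n)) < d + 1 / (real n + 1)"
    by metis
  have par: "Re (ip (m - m') (m - m')) \<le> 2 * Re (ip (x - m) (x - m)) + 2 * Re (ip (x - m') (x - m')) - 4 * d"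
    if mM: "m \<in> M" "m' \<in> M" for m m'
  proof -
    define u where "u = x - m"
    define v where "v = x - m'"
    define mid where "mid = smul (1/2) (m + m')"
    have midM: "mid \<in> M" unfolding mid_def using mM Madd Msm by blast
    have hh: "smul 2 (smul (1/2) (m + m')) = m + m'" using smul_assoc[of 2 "1/2" "m+m'"] by simp
    have "smul 2 (x - mid) = smul 2 x - (m + m')"
      unfolding mid_def by (simp add: smul_diff_right hh)
    also have "\<dots> = u + v" unfolding u_def v_def
      using smul_add_left[of 1 1 x] by (simp add: algebra_simps)
    finally have uv: "u + v = smul 2 (x - mid)" by simp
    have "Re (ip (u + v) (u + v)) = 4 * Re (ip (x - mid) (x - mid))"
      unfolding uv hnorm_sq[symmetric] hnorm_smul by (simp add: power2_eq_square)
    also have "\<dots> \<ge> 4 * d" using dlow[OF midM] by simp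
    finally have "Re (ip (u + v) (u + v)) \<ge> 4 * d" .
    moreover have "u - v = m' - m" unfolding u_def v_def by (simp add: algebra_simps)
    moreover have "Re (ip (m' - m) (m' - m)) = Re (ip (m - m') (m - m'))"
      using hnorm_sym[of m' m] by (simp add: hnorm_sq[symmetric])
    ultimately have "Re (ip (m - m') (m - m')) + Re (ip (u + v) (u + v)) = 2 * Re (ip u u) + 2 * Re (ip v v)"
      and "4 * d \<le> Re (ip (u + v) (u + v))"
      using parallelogram[of u v] by simp_all
    then show ?thesis unfolding u_def v_def by linarith
  qed
  have cauchy: "\<forall>e>0. \<exists>N. \<forall>j\<ge>N. \<forall>k\<ge>N. hnorm ip (X j - X k) < e"
  proof (intro allI impI)
    fix e :: real assume e: "e > 0"
    obtain N :: nat where N: "4 / e\<^sup>2 < real N" using reals_Archimedean2 by blast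
    have Np: "4 / (real N + 1) < e\<^sup>2"
    proof -
      have "4 / e\<^sup>2 < real N + 1" using N by simp
      then show ?thesis using e by (simp add: field_simps)
    qed
    show "\<exists>N. \<forall>j\<ge>N. \<forall>k\<ge>N. hnorm ip (X j - X k) < e"
    proof (intro exI allI impI)
      fix j k assume jk: "N \<le> j" "N \<le> k"
      have "Re (ip (X j - X k) (X j - X k)) \<le> 2 * Re (ip (x - X j) (x - X j)) + 2 * Re (ip (x - X k) (x - X k)) - 4 * d"
        by (rule par[OF X(1) X(1)])
      also have "\<dots> \<le> 2 / (real j + 1) + 2 / (real k + 1)"
        using X(2)[of j] X(2)[of k] by simp
      also have "\<dots> \<le> 2 / (real N + 1) + 2 / (real N + 1)"
        using jk by (intro add_mono divide_left_mono) auto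
      also have "\<dots> < e\<^sup>2" using Np by simp
      finally have "(hnorm ip (X j - X k))\<^sup>2 < e\<^sup>2" by (simp add: hnorm_sq)
      then show "hnorm ip (X j - X k) < e" using power2_less_imp_less[of "hnorm ip (X j - X k)" e] e by simp
    qed
  qed
  obtain p where p: "(\<lambda>n. hnorm ip (X n - p)) \<longlonglongrightarrow> 0" using complete[OF cauchy] by blast
  have pM: "p \<in> M" using Mcl[OF _ p] X(1) by blast
  have lim2: "(\<lambda>n. sqrt (d + 1 / (real n + 1)) + hnorm ip (X n - p)) \<longlonglongrightarrow> sqrt d + 0"
  proof (intro tendsto_add tendsto_real_sqrt p)
    have "(\<lambda>n. 1 / (real n + 1)) \<longlonglongrightarrow> 0" using LIMSEQ_inverse_real_of_nat by (simp add: inverse_eq_divide add.commute)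
    then show "(\<lambda>n. d + 1 / (real n + 1)) \<longlonglongrightarrow> d" using tendsto_add[OF tendsto_const, of _ 0 sequentially d] by simp
  qed
  have bnd: "hnorm ip (x - p) \<le> sqrt (d + 1 / (real n + 1)) + hnorm ip (X n - p)" for n
  proof -
    have "hnorm ip (x - p) \<le> hnorm ip (x - X n) + hnorm ip (X n - p)"
      using hnorm_triangle[of "x - X n" "X n - p"] by simp
    moreover have "hnorm ip (x - X n) \<le> sqrt (d + 1 / (real n + 1))"
      using X(2)[of n] unfolding hnorm_def by simp
    ultimately show ?thesis by simp
  qed
  have "hnorm ip (x - p) \<le> sqrt d + 0"
    by (rule tendsto_le[OF trivial_limit_sequentially lim2 tendsto_const]) (simp add: bnd)
  then have dp: "Re (ip (x - p) (x - p)) \<le> d"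
  proof -
    assume h: "hnorm ip (x - p) \<le> sqrt d + 0"
    have d0: "0 \<le> d" unfolding d_def by (rule cInf_greatest[OF Dne]) (auto simp: D_def ip_pos)
    have "(hnorm ip (x - p))\<^sup>2 \<le> (sqrt d)\<^sup>2" using h hnorm_nonneg by (simp add: power_mono)
    then show ?thesis using d0 by (simp add: hnorm_sq)
  qed
  show ?thesis
  proof (intro bexI[OF _ pM] ballI)
    fix m assume mM: "m \<in> M"
    define w where "w = x - p"
    define c where "c = ip w m"
    have "(cmod c)\<^sup>2 \<le> 0 * Re (ip m m)"
    proof (rule quad_lemma)
      fix t
      have inM: "p + smul (complex_of_real t * c) m \<in> M" using pM mM Madd Msm by blast
      have "d \<le> Re (ip (x - (p + smul (complex_of_real t * c) m)) (x - (p + smul (complex_of_real t * c) m)))"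
        by (rule dlow[OF inM])
      also have "x - (p + smul (complex_of_real t * c) m) = w - smul (complex_of_real t * ip ((\<lambda>x. x) w) m) m"
        unfolding w_def c_def by (simp add: algebra_simps)
      finally have "d \<le> Re (ip w w) - 2 * t * (cmod c)\<^sup>2 + t\<^sup>2 * (cmod c)\<^sup>2 * Re (ip m m)"
        using expand[OF posop_id, of w t m] unfolding c_def by simp
      then show "0 \<le> 0 - 2 * t * (cmod c)\<^sup>2 + t\<^sup>2 * (cmod c)\<^sup>2 * Re (ip m m)"
        using dp unfolding w_def by simp
    qed (simp_all add: ip_pos)
    then show "ip (x - p) m = 0" unfolding c_def w_def by simp
  qed
qed

end



context chs begin

lemma limit_le_zero:
  fixes phi C :: real
  assumes b: "\<And>n. phi \<le> C * hnorm ip (X n - L)" and l: "(\<lambda>n. hnorm ip (X n - L)) \<longlonglongrightarrow> 0"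
  shows "phi \<le> 0"
proof -
  have "(\<lambda>n. C * hnorm ip (X n - L)) \<longlonglongrightarrow> C * 0" by (intro tendsto_mult tendsto_const l)
  then show ?thesis using tendsto_le[OF trivial_limit_sequentially _ tendsto_const, of "\<lambda>n. C * hnorm ip (X n - L)" 0 phi] b
    by simp
qed

lemma riesz:
  assumes fadd: "\<And>x y. f (x + y) = f x + f y" and fsm: "\<And>a x. f (smul a x) = a * f x"
    and fb: "\<And>x. cmod (f x) \<le> C * hnorm ip x"
  shows "\<exists>z. \<forall>x. f x = ip x z"
proof -
  have f0: "f 0 = 0" using fadd[of 0 0] by simp
  have fdiff: "f (a - b) = f a - f b" for a b using fadd[of "a - b" b] by (simp add: algebra_simps)
  define M where "M = {x. f x = 0}"
  have C: "closed_sub M"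
    unfolding closed_sub_def
  proof (intro conjI allI impI)
    show "0 \<in> M" using f0 M_def by simp
    show "x + y \<in> M" if "x \<in> M" "y \<in> M" for x y using that fadd M_def by simp
    show "smul a x \<in> M" if "x \<in> M" for a x using that fsm M_def by simp
    fix X L assume XM: "\<forall>n. X n \<in> M" and l: "(\<lambda>n. hnorm ip (X n - L)) \<longlonglongrightarrow> 0"
    have "cmod (f L) \<le> C * hnorm ip (X n - L)" for n
    proof -
      have "f L = f (L - X n)" using XM fdiff[of L "X n"] M_def by simp
      then show ?thesis using fb[of "L - X n"] hnorm_sym[of L "X n"] by simp
    qed
    then have "cmod (f L) \<le> 0" using limit_le_zero l by blast
    then show "L \<in> M" using M_def by simp
  qed
  show ?thesis
  proof (cases "\<forall>x. f x = 0")
    case True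
    then show ?thesis by (intro exI[of _ 0]) simp
  next
    case False
    then obtain u where u: "f u \<noteq> 0" by blast
    obtain p where pM: "p \<in> M" and po: "\<forall>m\<in>M. ip (u - p) m = 0" using projection[OF C] by blast
    define q where "q = u - p"
    have fq: "f q \<noteq> 0" using u pM fdiff[of u p] M_def q_def by simp
    define r where "r = Re (ip q q)"
    have qq: "ip q q = complex_of_real r" using ip_self_real[of q] r_def by (simp add: complex_eq_iff)
    have rpos: "r \<noteq> 0"
    proof
      assume "r = 0"
      then have "q = 0" using qq ip_zero by simp
      then show False using fq f0 by simp
    qed
    define z where "z = smul (cnj (f q) / complex_of_real r) q"
    show ?thesis
    proof (intro exI allI)
      fix x
      define w where "w = x - smul (f x / f q) q"
      have "f w = 0" unfolding w_def using fdiff fsm fq by simp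
      then have "ip q w = 0" using po M_def q_def by simp
      then have "ip w q = 0" using ip_cnj[of q w] by simp
      then have "ip x q - (f x / f q) * ip q q = 0" unfolding w_def by (simp add: ip_diff_left ip_smul_left)
      then have xq: "ip x q = (f x / f q) * complex_of_real r" using qq by simp
      have "ip x z = (f q / complex_of_real r) * ip x q" unfolding z_def by (simp add: ip_smul_right)
      also have "\<dots> = f x" using xq fq rpos by (simp add: field_simps)
      finally show "f x = ip x z" by simp
    qed
  qed
qed

lemma bounded_op_lin: "bounded_op smul ip T \<Longrightarrow> linop T"
  by (simp add: bounded_op_def linop_def)

lemma bounded_op_bound: "bounded_op smul ip T \<Longrightarrow> \<exists>C\<ge>0. \<forall>x. hnorm ip (T x) \<le> C * hnorm ip x"
proof -
  assume "bounded_op smul ip T"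
  then obtain C where C: "\<forall>x. hnorm ip (T x) \<le> C * hnorm ip x" by (auto simp: bounded_op_def)
  have "hnorm ip (T x) \<le> max C 0 * hnorm ip x" for x
    using C[rule_format, of x] hnorm_nonneg[of x] by (metis max.cobounded1 mult_right_mono order_trans)
  then show ?thesis by (intro exI[of _ "max C 0"]) auto
qed

lemma bounded_op_comp: "bounded_op smul ip S \<Longrightarrow> bounded_op smul ip T \<Longrightarrow> bounded_op smul ip (\<lambda>x. S (T x))"
proof -
  assume s: "bounded_op smul ip S" and t: "bounded_op smul ip T"
  obtain C where C: "C \<ge> 0" "\<forall>x. hnorm ip (S x) \<le> C * hnorm ip x" using bounded_op_bound[OF s] by blast
  obtain D where D: "D \<ge> 0" "\<forall>x. hnorm ip (T x) \<le> D * hnorm ip x" using bounded_op_bound[OF t] by blast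
  have "hnorm ip (S (T x)) \<le> (C * D) * hnorm ip x" for x
  proof -
    have "hnorm ip (S (T x)) \<le> C * hnorm ip (T x)" using C by blast
    also have "\<dots> \<le> C * (D * hnorm ip x)" using D C by (simp add: mult_left_mono)
    finally show ?thesis by (simp add: mult.assoc)
  qed
  then show ?thesis using s t by (auto simp: bounded_op_def)
qed

lemma bounded_op_plus: "bounded_op smul ip S \<Longrightarrow> bounded_op smul ip T \<Longrightarrow> bounded_op smul ip (\<lambda>x. S x + T x)"
proof -
  assume s: "bounded_op smul ip S" and t: "bounded_op smul ip T"
  obtain C where C: "C \<ge> 0" "\<forall>x. hnorm ip (S x) \<le> C * hnorm ip x" using bounded_op_bound[OF s] by blast
  obtain D where D: "D \<ge> 0" "\<forall>x. hnorm ip (T x) \<le> D * hnorm ip x" using bounded_op_bound[OF t] by blast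
  have "hnorm ip (S x + T x) \<le> (C + D) * hnorm ip x" for x
  proof -
    have "hnorm ip (S x + T x) \<le> hnorm ip (S x) + hnorm ip (T x)" by (rule hnorm_triangle)
    also have "\<dots> \<le> C * hnorm ip x + D * hnorm ip x" using C D by (meson add_mono)
    finally show ?thesis by (simp add: algebra_simps)
  qed
  moreover have "linop (\<lambda>x. S x + T x)" using s t by (intro linop_plus bounded_op_lin)
  ultimately show ?thesis by (auto simp: bounded_op_def linop_def)
qed

lemma adj_prop:
  assumes S: "bounded_op smul ip S"
  shows "ip (S x) y = ip x (adj ip S y)"
proof -
  have L: "linop S" using S by (rule bounded_op_lin)
  obtain C where C: "C \<ge> 0" "\<forall>x. hnorm ip (S x) \<le> C * hnorm ip x" using bounded_op_bound[OF S] by blast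
  have "\<forall>y. \<exists>z. \<forall>x. ip (S x) y = ip x z"
  proof
    fix y
    show "\<exists>z. \<forall>x. ip (S x) y = ip x z"
    proof (rule riesz)
      show "ip (S (a + b)) y = ip (S a) y + ip (S b) y" for a b by (simp add: linop_add[OF L] ip_add_left)
      show "ip (S (smul a b)) y = a * ip (S b) y" for a b by (simp add: linop_smul[OF L] ip_smul_left)
      show "cmod (ip (S b) y) \<le> (C * hnorm ip y) * hnorm ip b" for b
      proof -
        have "cmod (ip (S b) y) \<le> hnorm ip (S b) * hnorm ip y" by (rule hnorm_cs)
        also have "\<dots> \<le> (C * hnorm ip b) * hnorm ip y" using C hnorm_nonneg by (simp add: mult_right_mono)
        finally show ?thesis by (simp add: algebra_simps)
      qed
    qed
  qed
  then obtain T where T: "\<forall>y x. ip (S x) y = ip x (T y)" by metis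
  have "\<forall>x y. ip (S x) y = ip x (adj ip S y)"
    unfolding adj_def
  proof (rule theI[of _ T])
    show "\<forall>x y. ip (S x) y = ip x (T y)" using T by blast
    fix T' assume T': "\<forall>x y. ip (S x) y = ip x (T' y)"
    show "T' = T"
    proof
      fix y
      have "ip (T' y - T y) (T' y - T y) = 0"
        using T' T by (simp add: ip_diff_right)
      then show "T' y = T y" using ip_zero by (metis eq_iff_diff_eq_0)
    qed
  qed
  then show ?thesis by blast
qed

lemma proj_range_A: "proj_range ip A (A w) = A w"
  unfolding proj_range_def
proof (rule the_equality)
  have "A w \<in> range_closure ip A" unfolding range_closure_def
    by (auto intro!: exI[of _ w] simp: hnorm_def)
  then show "A w \<in> range_closure ip A \<and> (\<forall>m\<in>range_closure ip A. ip (A w - A w) m = 0)" by simp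
  fix p assume p: "p \<in> range_closure ip A \<and> (\<forall>m\<in>range_closure ip A. ip (A w - p) m = 0)"
  have "A w \<in> range_closure ip A" unfolding range_closure_def
    by (auto intro!: exI[of _ w] simp: hnorm_def)
  then have "ip (A w - p) (A w - p) = 0" using p by (simp add: ip_diff_right)
  then show "p = A w" using ip_zero by (metis eq_iff_diff_eq_0)
qed

lemma mp_A:
  assumes Ab: "bounded_op smul ip A"
  shows "A (moore_penrose ip A (A v)) = A v"
proof -
  have L: "linop A" using Ab by (rule bounded_op_lin)
  obtain C where C: "C \<ge> 0" "\<forall>x. hnorm ip (A x) \<le> C * hnorm ip x" using bounded_op_bound[OF Ab] by blast
  define M where "M = {k. A k = 0}"
  have CM: "closed_sub M"
    unfolding closed_sub_def
  proof (intro conjI allI impI)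
    show "0 \<in> M" using linop_zero[OF L] M_def by simp
    show "x + y \<in> M" if "x \<in> M" "y \<in> M" for x y using that linop_add[OF L] M_def by simp
    show "smul a x \<in> M" if "x \<in> M" for a x using that linop_smul[OF L] M_def by simp
    fix X L' assume XM: "\<forall>n. X n \<in> M" and l: "(\<lambda>n. hnorm ip (X n - L')) \<longlonglongrightarrow> 0"
    have "hnorm ip (A L') \<le> C * hnorm ip (X n - L')" for n
    proof -
      have "A L' = A (L' - X n)" using XM linop_diff[OF L, of L' "X n"] M_def by simp
      then show ?thesis using C(2)[rule_format, of "L' - X n"] hnorm_sym[of L' "X n"] by simp
    qed
    then have "hnorm ip (A L') \<le> 0" using limit_le_zero l by blast
    then have "hnorm ip (A L') = 0" using hnorm_nonneg by (meson antisym)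
    then show "L' \<in> M" using hnorm_eq0 M_def by simp
  qed
  obtain p where pM: "p \<in> M" and po: "\<forall>m\<in>M. ip (v - p) m = 0" using projection[OF CM] by blast
  let ?P = "\<lambda>x. (\<forall>k. A k = 0 \<longrightarrow> ip x k = 0) \<and> A x = proj_range ip A (A v)"
  have "?P (THE x. ?P x)"
  proof (rule theI[of _ "v - p"])
    show "?P (v - p)" using po pM M_def by (simp add: proj_range_A linop_diff[OF L])
    fix x assume x: "?P x"
    have "A (x - (v - p)) = 0" using x pM M_def by (simp add: proj_range_A linop_diff[OF L])
    then have "ip (x - (v - p)) (x - (v - p)) = 0" using x po M_def by (simp add: ip_diff_left)
    then show "x = v - p" using ip_zero by (metis eq_iff_diff_eq_0)
  qed
  then show ?thesis unfolding moore_penrose_def by (simp add: proj_range_A)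
qed

end



context chs begin

lemma abound:
  assumes P: "posop A" and Ab: "\<And>x. hnorm ip (A x) \<le> al * hnorm ip x" and al: "0 \<le> al"
    and U: "linop U" and Ub: "\<And>x. hnorm ip (U x) \<le> K * hnorm ip x" and K: "0 \<le> K"
    and sym: "\<And>x y. ip (A (U x)) y = ip (A x) (U y)"
  shows "normA ip A (U x) \<le> (K + 1) * normA ip A x"
proof -
  define K0 where "K0 = K + 1"
  have K0: "0 < K0" using K K0_def by simp
  have Ub0: "hnorm ip (U v) \<le> K0 * hnorm ip v" for v
    using Ub[of v] hnorm_nonneg[of v] K0_def by (smt (verit) mult_right_mono)
  have st1: "(normA ip A (U v))\<^sup>2 \<le> normA ip A v * normA ip A (U (U v))" for v
  proof -
    have "(normA ip A (U v))\<^sup>2 = Re (ip (A (U v)) (U v))" by (rule normA_sq[OF P])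
    also have "\<dots> = Re (ip (A v) (U (U v)))" by (simp add: sym)
    also have "\<dots> \<le> cmod (ip (A v) (U (U v)))" by (rule complex_Re_le_cmod)
    also have "\<dots> \<le> normA ip A v * normA ip A (U (U v))" by (rule cauchy_schwarz2[OF P])
    finally show ?thesis .
  qed
  have st2: "normA ip A v \<le> sqrt al * hnorm ip v" for v
  proof -
    have "(normA ip A v)\<^sup>2 = Re (ip (A v) v)" by (rule normA_sq[OF P])
    also have "\<dots> \<le> cmod (ip (A v) v)" by (rule complex_Re_le_cmod)
    also have "\<dots> \<le> hnorm ip (A v) * hnorm ip v" by (rule hnorm_cs)
    also have "\<dots> \<le> (al * hnorm ip v) * hnorm ip v" using Ab[of v] hnorm_nonneg[of v] by (simp add: mult_right_mono)
    also have "\<dots> = (sqrt al * hnorm ip v)\<^sup>2" using al by (simp add: power2_eq_square power_mult_distrib)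
    finally have h: "(normA ip A v)\<^sup>2 \<le> (sqrt al * hnorm ip v)\<^sup>2" .
    show ?thesis by (rule power2_le_imp_le[OF h]) (simp add: hnorm_nonneg al)
  qed
  have st3: "hnorm ip ((U ^^ k) v) \<le> K0 ^ k * hnorm ip v" for k v
  proof (induction k)
    case 0 then show ?case by simp
  next
    case (Suc k)
    have "hnorm ip ((U ^^ Suc k) v) \<le> K0 * hnorm ip ((U ^^ k) v)" using Ub0 by simp
    also have "\<dots> \<le> K0 * (K0 ^ k * hnorm ip v)" using Suc K0 by (simp add: mult_left_mono)
    finally show ?case by (simp add: mult.assoc)
  qed
  have unit: "normA ip A (U y) \<le> K0" if y1: "normA ip A y = 1" for y
  proof (rule ccontr)
    assume "\<not> normA ip A (U y) \<le> K0"
    define a where "a = (\<lambda>k. normA ip A ((U ^^ k) y))"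
    have a1: "a 1 > K0" using \<open>\<not> normA ip A (U y) \<le> K0\<close> a_def by simp
    have a0: "a 0 = 1" using y1 a_def by simp
    have anneg: "0 \<le> a k" for k using normA_nonneg[OF P] a_def by simp
    have arec: "(a (Suc k))\<^sup>2 \<le> a k * a (Suc (Suc k))" for k
      using st1[of "(U ^^ k) y"] a_def by simp
    have ind: "a (Suc k) \<ge> a 1 * a k \<and> a k \<ge> (a 1) ^ k" for k
    proof (induction k)
      case 0 then show ?case using a0 by simp
    next
      case (Suc k)
      have a1p: "a 1 > 0" using a1 K0 by simp
      have akp: "a k > 0" using Suc a1p by (meson less_le_trans zero_less_power)
      have "a (Suc k) \<ge> a 1 * a k" using Suc by simp
      then have "a (Suc k) * (a 1 * a k) \<le> a (Suc k) * a (Suc k)" using anneg by (simp add: mult_left_mono)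
      also have "\<dots> \<le> a k * a (Suc (Suc k))" using arec[of k] by (simp add: power2_eq_square)
      finally have "a k * (a 1 * a (Suc k)) \<le> a k * a (Suc (Suc k))" by (simp add: algebra_simps)
      then have i1: "a 1 * a (Suc k) \<le> a (Suc (Suc k))" using akp by simp
      have "a 1 ^ Suc k = a 1 * a 1 ^ k" by simp
      also have "\<dots> \<le> a 1 * a k" using Suc a1p by (simp add: mult_left_mono)
      also have "\<dots> \<le> a (Suc k)" using Suc by simp
      finally show ?case using i1 by simp
    qed
    have "(a 1 / K0) ^ k \<le> sqrt al * hnorm ip y" for k
    proof -
      have "a 1 ^ k \<le> a k" using ind by blast
      also have "\<dots> \<le> sqrt al * hnorm ip ((U ^^ k) y)" using st2 a_def by simp
      also have "\<dots> \<le> sqrt al * (K0 ^ k * hnorm ip y)" using st3[of k y] al by (simp add: mult_left_mono)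
      finally have "a 1 ^ k \<le> K0 ^ k * (sqrt al * hnorm ip y)" by (simp add: algebra_simps)
      then show ?thesis using K0 by (simp add: power_divide divide_le_eq mult.commute)
    qed
    moreover have "1 < a 1 / K0" using a1 K0 by simp
    then obtain n where "sqrt al * hnorm ip y < (a 1 / K0) ^ n" using real_arch_pow by blast
    ultimately show False by (meson not_le)
  qed
  show ?thesis
  proof (cases "normA ip A x = 0")
    case True
    have "(normA ip A (U x))\<^sup>2 \<le> 0" using st1[of x] True by simp
    then have "normA ip A (U x) = 0" by simp
    then show ?thesis using True by simp
  next
    case False
    define s where "s = normA ip A x"
    have sp: "s > 0" using False normA_nonneg[OF P, of x] s_def by simp
    define y where "y = smul (complex_of_real (1 / s)) x"
    have "normA ip A y = 1" unfolding y_def normA_smul[OF P] using sp s_def by (simp add: norm_divide)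
    then have "normA ip A (U y) \<le> K0" by (rule unit)
    moreover have "normA ip A (U y) = normA ip A (U x) / s"
      unfolding y_def linop_smul[OF U] normA_smul[OF P] using sp by (simp add: norm_divide)
    ultimately show ?thesis using sp s_def K0_def by (simp add: divide_le_eq mult.commute)
  qed
qed

end



context chs begin

lemma ip_congr:
  assumes P: "posop A" and e: "A u = A u'"
  shows "ip (A u) u = ip (A u') u'"
proof -
  have "ip (A u) u = ip u (A u)" by (rule posop_herm[OF P])
  also have "\<dots> = ip u (A u')" using e by simp
  also have "\<dots> = ip (A u) u'" by (rule posop_herm[OF P, symmetric])
  also have "\<dots> = ip (A u') u'" using e by simp
  finally show ?thesis .
qed

lemma opnorm_congr:
  assumes P: "posop A" and e: "\<And>z. A (F z) = A (G z)"
  shows "opnormA ip A F = opnormA ip A G"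
proof -
  have "normA ip A (F z) = normA ip A (G z)" for z
    unfolding normA_def using ip_congr[OF P e[of z]] by simp
  then show ?thesis unfolding opnormA_def by simp
qed

lemma opnorm_bdd:
  assumes b: "\<And>z. normA ip A (T z) \<le> B * normA ip A z"
  shows "bdd_above (insert 0 {normA ip A (T z) | z. normA ip A z = 1})"
proof (rule bdd_aboveI[of _ "max B 0"])
  fix x assume "x \<in> insert 0 {normA ip A (T z) | z. normA ip A z = 1}"
  then consider "x = 0" | w where "x = normA ip A (T w)" "normA ip A w = 1" by blast
  then show "x \<le> max B 0"
  proof cases
    case 2
    then have "x \<le> B" using b[of w] by simp
    then show ?thesis by simp
  qed simp
qed

lemma opnorm_nonneg:
  assumes b: "\<And>z. normA ip A (T z) \<le> B * normA ip A z"
  shows "0 \<le> opnormA ip A T"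
  unfolding opnormA_def by (rule cSup_upper[OF _ opnorm_bdd[OF b]]) simp

lemma opnorm_upper:
  assumes b: "\<And>z. normA ip A (T z) \<le> B * normA ip A z" and z: "normA ip A z = 1"
  shows "normA ip A (T z) \<le> opnormA ip A T"
  unfolding opnormA_def
  by (rule cSup_upper[OF _ opnorm_bdd[OF b]]) (use z in blast)

lemma real_ineq:
  fixes p nS nR nRS :: real
  assumes "0 \<le> p" "0 \<le> nS" "0 \<le> nR" "0 \<le> nRS" "p \<le> nS" "p \<le> nR" "nS\<^sup>2 \<le> nRS"
  shows "p\<^sup>2 + nS ^ 4 \<le> sqrt (nR\<^sup>2 + nRS\<^sup>2) * sqrt (nS\<^sup>2 + nRS\<^sup>2)"
proof -
  have "p\<^sup>2 \<le> nS * nR" using assms by (simp add: power2_eq_square mult_mono)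
  moreover have "nS ^ 4 \<le> nRS\<^sup>2"
  proof -
    have "nS ^ 4 = (nS\<^sup>2)\<^sup>2" by simp
    also have "\<dots> \<le> nRS\<^sup>2" using assms by (intro power_mono) auto
    finally show ?thesis .
  qed
  moreover have "nS * nR + nRS\<^sup>2 \<le> sqrt ((nR\<^sup>2 + nRS\<^sup>2) * (nS\<^sup>2 + nRS\<^sup>2))"
  proof (rule real_le_rsqrt)
    have "0 \<le> (nR * nRS - nS * nRS)\<^sup>2" by simp
    then show "(nS * nR + nRS\<^sup>2)\<^sup>2 \<le> (nR\<^sup>2 + nRS\<^sup>2) * (nS\<^sup>2 + nRS\<^sup>2)"
      by (simp add: power2_eq_square algebra_simps)
  qed
  ultimately show ?thesis by (simp add: real_sqrt_mult)
qed

end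

theorem corollary2p26:
  fixes smul :: "complex \<Rightarrow> 'h::ab_group_add \<Rightarrow> 'h"
    and ip :: "'h \<Rightarrow> 'h \<Rightarrow> complex"
    and A S :: "'h \<Rightarrow> 'h"
  assumes "complex_hilbert smul ip"
    and "bounded_op smul ip A" and "positive_op ip A"
    and "S \<in> B_A smul ip A"
  shows "(domegaA ip A S)\<^sup>2 \<le>
     sqrt (opnormA ip A (\<lambda>z. S (sharpA ip A S z) + (sharpA ip A S \<circ> S) ((sharpA ip A S \<circ> S) z)))
   * sqrt (opnormA ip A (\<lambda>z. sharpA ip A S (S z) + (sharpA ip A S \<circ> S) ((sharpA ip A S \<circ> S) z)))"
proof -
  interpret chs smul ip by (rule chs.intro) (rule assms(1))
  have Ab: "bounded_op smul ip A" by (rule assms(2))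
  have P: "posop A" using assms(3) bounded_op_lin[OF Ab] by (simp add: posop_def positive_op_def)
  obtain al where al: "al \<ge> 0" "\<forall>x. hnorm ip (A x) \<le> al * hnorm ip x" using bounded_op_bound[OF Ab] by blast
  have Sb: "bounded_op smul ip S" using assms(4) by (simp add: B_A_def)
  obtain R where Rb: "bounded_op smul ip R" and AR: "A \<circ> R = adj ip S \<circ> A"
    using assms(4) by (auto simp: B_A_def)
  have ARx: "A (R x) = adj ip S (A x)" for x using AR by (metis comp_apply)
  have key1: "ip (A (R x)) y = ip (A x) (S y)" for x y
  proof -
    have "ip (A (R x)) y = cnj (ip y (adj ip S (A x)))" using ip_cnj[of y "A (R x)"] ARx[of x] by simp
    also have "\<dots> = cnj (ip (S y) (A x))" using adj_prop[OF Sb] by simp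
    also have "\<dots> = ip (A x) (S y)" using ip_cnj[of "A x" "S y"] by simp
    finally show ?thesis .
  qed
  have key2: "ip (A (S x)) y = ip (A x) (R y)" for x y
  proof -
    have "ip (A (S x)) y = cnj (ip (A y) (S x))" by (rule posop_herm2[OF P])
    also have "\<dots> = cnj (ip (A (R y)) x)" by (simp add: key1)
    also have "\<dots> = ip (A x) (R y)" using posop_herm2[OF P, of x "R y"] by simp
    finally show ?thesis .
  qed
  define sh where "sh = sharpA ip A S"
  have shA: "A (sh z) = A (R z)" for z
    unfolding sh_def sharpA_def using mp_A[OF Ab, of "R z"] ARx[of z] by simp
  have LA: "linop A" by (rule bounded_op_lin[OF Ab])
  have nullS: "A (S k) = 0" if "A k = 0" for k
  proof (rule posop_zero[OF P])
    show "Re (ip (A (S k)) (S k)) = 0" using key2[of k "S k"] that by simp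
  qed
  have nullR: "A (R k) = 0" if "A k = 0" for k
  proof (rule posop_zero[OF P])
    show "Re (ip (A (R k)) (R k)) = 0" using key1[of k "R k"] that by simp
  qed
  have respS: "A (S u) = A (S v)" if "A u = A v" for u v
  proof -
    have "A (u - v) = 0" using that linop_diff[OF LA] by simp
    then have "A (S (u - v)) = 0" by (rule nullS)
    then show ?thesis using linop_diff[OF LA] linop_diff[OF bounded_op_lin[OF Sb]] by simp
  qed
  have respR: "A (R u) = A (R v)" if "A u = A v" for u v
  proof -
    have "A (u - v) = 0" using that linop_diff[OF LA] by simp
    then have "A (R (u - v)) = 0" by (rule nullR)
    then show ?thesis using linop_diff[OF LA] linop_diff[OF bounded_op_lin[OF Rb]] by simp
  qed
  define T1 where "T1 = (\<lambda>z. S (R z) + R (S (R (S z))))"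
  define T2 where "T2 = (\<lambda>z. R (S z) + R (S (R (S z))))"
  have eq1: "opnormA ip A (\<lambda>z. S (sh z) + (sh \<circ> S) ((sh \<circ> S) z)) = opnormA ip A T1"
  proof (rule opnorm_congr[OF P])
    fix z
    have "A (S (sh z)) = A (S (R z))" by (rule respS[OF shA])
    moreover have "A (sh (S (sh (S z)))) = A (R (S (R (S z))))"
      using shA[of "S (sh (S z))"] respR[OF respS[OF shA[of "S z"]]] by simp
    ultimately show "A (S (sh z) + (sh \<circ> S) ((sh \<circ> S) z)) = A (T1 z)"
      unfolding T1_def by (simp add: linop_add[OF LA])
  qed
  have eq2: "opnormA ip A (\<lambda>z. sh (S z) + (sh \<circ> S) ((sh \<circ> S) z)) = opnormA ip A T2"
  proof (rule opnorm_congr[OF P])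
    fix z
    have "A (sh (S z)) = A (R (S z))" by (rule shA)
    moreover have "A (sh (S (sh (S z)))) = A (R (S (R (S z))))"
      using shA[of "S (sh (S z))"] respR[OF respS[OF shA[of "S z"]]] by simp
    ultimately show "A (sh (S z) + (sh \<circ> S) ((sh \<circ> S) z)) = A (T2 z)"
      unfolding T2_def by (simp add: linop_add[OF LA])
  qed
  have SRb: "bounded_op smul ip (\<lambda>x. S (R x))" by (rule bounded_op_comp[OF Sb Rb])
  have RSb: "bounded_op smul ip (\<lambda>x. R (S x))" by (rule bounded_op_comp[OF Rb Sb])
  have RSRSb: "bounded_op smul ip (\<lambda>x. R (S (R (S x))))" using bounded_op_comp[OF RSb RSb] by simp
  have T1b: "bounded_op smul ip T1" unfolding T1_def using bounded_op_plus[OF SRb RSRSb] by simp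
  have T2b: "bounded_op smul ip T2" unfolding T2_def using bounded_op_plus[OF RSb RSRSb] by simp
  have T1s: "ip (A (T1 x)) y = ip (A x) (T1 y)" for x y
    unfolding T1_def by (simp add: linop_add[OF LA] ip_add_left ip_add_right key1 key2)
  have T2s: "ip (A (T2 x)) y = ip (A x) (T2 y)" for x y
    unfolding T2_def by (simp add: linop_add[OF LA] ip_add_left ip_add_right key1 key2)
  obtain K1 where K1: "K1 \<ge> 0" "\<forall>x. hnorm ip (T1 x) \<le> K1 * hnorm ip x" using bounded_op_bound[OF T1b] by blast
  obtain K2 where K2: "K2 \<ge> 0" "\<forall>x. hnorm ip (T2 x) \<le> K2 * hnorm ip x" using bounded_op_bound[OF T2b] by blast
  have B1: "normA ip A (T1 z) \<le> (K1 + 1) * normA ip A z" for z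
    by (rule abound[OF P _ al(1) bounded_op_lin[OF T1b] _ K1(1) T1s]) (use al K1 in auto)
  have B2: "normA ip A (T2 z) \<le> (K2 + 1) * normA ip A z" for z
    by (rule abound[OF P _ al(1) bounded_op_lin[OF T2b] _ K2(1) T2s]) (use al K2 in auto)
  define Mv where "Mv = sqrt (opnormA ip A T1) * sqrt (opnormA ip A T2)"
  have elem: "sqrt ((cmod (ip (A (S z)) z))\<^sup>2 + (normA ip A (S z)) ^ 4) \<le> sqrt Mv" if z1: "normA ip A z = 1" for z
  proof -
    define p where "p = cmod (ip (A (S z)) z)"
    define nS where "nS = normA ip A (S z)"
    define nR where "nR = normA ip A (R z)"
    define nRS where "nRS = normA ip A (R (S z))"
    have e1: "p \<le> nS" using cauchy_schwarz2[OF P, of "S z" z] z1 p_def nS_def by simp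
    have e2: "p \<le> nR"
    proof -
      have "ip (A (S z)) z = cnj (ip (A (R z)) z)"
        using key2[of z z] posop_herm2[OF P, of "R z" z] by simp
      then have "p = cmod (ip (A (R z)) z)" using p_def by simp
      also have "\<dots> \<le> nR" using cauchy_schwarz2[OF P, of "R z" z] z1 nR_def by simp
      finally show ?thesis .
    qed
    have e3: "nS\<^sup>2 \<le> nRS"
    proof -
      have "nS\<^sup>2 = Re (ip (A (R (S z))) z)" using normA_sq[OF P, of "S z"] key1[of "S z" z] nS_def by simp
      also have "\<dots> \<le> cmod (ip (A (R (S z))) z)" by (rule complex_Re_le_cmod)
      also have "\<dots> \<le> nRS" using cauchy_schwarz2[OF P, of "R (S z)" z] z1 nRS_def by simp
      finally show ?thesis .
    qed
    have r1: "Re (ip (A (T1 z)) z) = nR\<^sup>2 + nRS\<^sup>2"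
      unfolding T1_def nR_def nRS_def
      by (simp add: linop_add[OF LA] ip_add_left key1 key2 normA_sq[OF P])
    have r2: "Re (ip (A (T2 z)) z) = nS\<^sup>2 + nRS\<^sup>2"
      unfolding T2_def nS_def nRS_def
      by (simp add: linop_add[OF LA] ip_add_left key1 key2 normA_sq[OF P])
    have o1: "nR\<^sup>2 + nRS\<^sup>2 \<le> opnormA ip A T1"
    proof -
      have "nR\<^sup>2 + nRS\<^sup>2 \<le> cmod (ip (A (T1 z)) z)" using r1 complex_Re_le_cmod by metis
      also have "\<dots> \<le> normA ip A (T1 z)" using cauchy_schwarz2[OF P, of "T1 z" z] z1 by simp
      also have "\<dots> \<le> opnormA ip A T1" by (rule opnorm_upper[OF B1 z1])
      finally show ?thesis .
    qed
    have o2: "nS\<^sup>2 + nRS\<^sup>2 \<le> opnormA ip A T2"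
    proof -
      have "nS\<^sup>2 + nRS\<^sup>2 \<le> cmod (ip (A (T2 z)) z)" using r2 complex_Re_le_cmod by metis
      also have "\<dots> \<le> normA ip A (T2 z)" using cauchy_schwarz2[OF P, of "T2 z" z] z1 by simp
      also have "\<dots> \<le> opnormA ip A T2" by (rule opnorm_upper[OF B2 z1])
      finally show ?thesis .
    qed
    have nn: "0 \<le> p" "0 \<le> nS" "0 \<le> nR" "0 \<le> nRS"
      using normA_nonneg[OF P] p_def nS_def nR_def nRS_def by auto
    have "p\<^sup>2 + nS ^ 4 \<le> sqrt (nR\<^sup>2 + nRS\<^sup>2) * sqrt (nS\<^sup>2 + nRS\<^sup>2)"
      by (rule real_ineq[OF nn e1 e2 e3])
    also have "\<dots> \<le> Mv" unfolding Mv_def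
      using o1 o2 opnorm_nonneg[OF B1] opnorm_nonneg[OF B2]
      by (intro mult_mono real_sqrt_le_mono) auto
    finally show ?thesis unfolding p_def nS_def by simp
  qed
  have Mv0: "0 \<le> Mv" unfolding Mv_def using opnorm_nonneg[OF B1] opnorm_nonneg[OF B2] by simp
  have dle: "domegaA ip A S \<le> sqrt Mv" unfolding domegaA_def
    by (rule cSup_least) (use elem Mv0 in auto)
  have dge: "0 \<le> domegaA ip A S" unfolding domegaA_def
    by (rule cSup_upper) (use elem Mv0 in \<open>auto intro!: bdd_aboveI[of _ "sqrt Mv"]\<close>)
  have "(domegaA ip A S)\<^sup>2 \<le> (sqrt Mv)\<^sup>2" using dle dge by (simp add: power_mono)
  also have "\<dots> = Mv" using Mv0 by simp
  finally show ?thesis unfolding Mv_def eq1[unfolded sh_def, symmetric] eq2[unfolded sh_def, symmetric] .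
qed

end
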